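(* Let $M$ be a monoid with zero and let $I$ be an rf-compatible ideal of $M$ such that $N=(M\setminus I)\cup\{0\}$ is a submonoid of $M$. Then $M$ is residually finite if and only if $N$ is residually finite.
   Context: An ideal $I$ of a monoid $M$ is rf-compatible with $M$ if for any two distinct $s,t\in I$ there is a congruence $\rho$ of finite index on the semigroup $I$ with $s/\rho\neq t/\rho$ such that $\rho\cup\Delta_M$ is a congruence on $M$, where $\Delta_M=\{(x,x):x\in M\}$. A monoid is residually finite if distinct elements are separated by homomorphisms to finite monoids. *)

theory Defs
  imports "HOL-Algebra.Group"
begin

definition monoid_with_zero :: "('a, 'b) monoid_scheme \<Rightarrow> 'a \<Rightarrow> bool" where
  "monoid_with_zero G z \<longleftrightarrow> monoid G \<and> z \<in> carrier G \<and>
     (\<forall>x\<in>carrier G. z \<otimes>\<^bsub>G\<^esub> x = z \<and> x \<otimes>\<^bsub>G\<^esub> z = z)"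

definition monoid_ideal :: "('a, 'b) monoid_scheme \<Rightarrow> 'a set \<Rightarrow> bool" where
  "monoid_ideal G I \<longleftrightarrow> I \<noteq> {} \<and> I \<subseteq> carrier G \<and>
     (\<forall>x\<in>carrier G. \<forall>s\<in>I. x \<otimes>\<^bsub>G\<^esub> s \<in> I \<and> s \<otimes>\<^bsub>G\<^esub> x \<in> I)"

definition semigroup_congruence :: "('a, 'b) monoid_scheme \<Rightarrow> 'a set \<Rightarrow> 'a rel \<Rightarrow> bool" where
  "semigroup_congruence G S \<rho> \<longleftrightarrow> equiv S \<rho> \<and>
     (\<forall>(a, b)\<in>\<rho>. \<forall>c\<in>S. (c \<otimes>\<^bsub>G\<^esub> a, c \<otimes>\<^bsub>G\<^esub> b) \<in> \<rho> \<and> (a \<otimes>\<^bsub>G\<^esub> c, b \<otimes>\<^bsub>G\<^esub> c) \<in> \<rho>)"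

definition rf_compatible :: "('a, 'b) monoid_scheme \<Rightarrow> 'a set \<Rightarrow> bool" where
  "rf_compatible G I \<longleftrightarrow>
     (\<forall>s\<in>I. \<forall>t\<in>I. s \<noteq> t \<longrightarrow>
        (\<exists>\<rho>. semigroup_congruence G I \<rho> \<and> finite (I // \<rho>) \<and> (s, t) \<notin> \<rho> \<and>
             semigroup_congruence G (carrier G) (\<rho> \<union> Id_on (carrier G))))"

definition monoid_hom :: "('a, 'c) monoid_scheme \<Rightarrow> ('b, 'd) monoid_scheme \<Rightarrow> ('a \<Rightarrow> 'b) set" where
  "monoid_hom G H = {h. h \<in> carrier G \<rightarrow> carrier H \<and>
     (\<forall>x\<in>carrier G. \<forall>y\<in>carrier G. h (x \<otimes>\<^bsub>G\<^esub> y) = h x \<otimes>\<^bsub>H\<^esub> h y) \<and>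
     h \<one>\<^bsub>G\<^esub> = \<one>\<^bsub>H\<^esub>}"

text \<open>Residual finiteness. Every finite monoid is isomorphic to one whose carrier is a
  set of natural numbers, so finite target monoids are taken on the type nat.\<close>
definition residually_finite :: "('a, 'b) monoid_scheme \<Rightarrow> bool" where
  "residually_finite G \<longleftrightarrow>
     (\<forall>x\<in>carrier G. \<forall>y\<in>carrier G. x \<noteq> y \<longrightarrow>
        (\<exists>(F :: nat monoid) h. monoid F \<and> finite (carrier F) \<and> h \<in> monoid_hom G F \<and> h x \<noteq> h y))"

end

theory Submission
  imports Defs
begin

lemma finite_quot_hom:
  fixes M :: "'a monoid" (structure) and \<psi> :: "'a \<Rightarrow> 'c"
  assumes mon: "monoid M" and fin: "finite (\<psi> ` carrier M)"
    and comp: "\<And>a a' b. a \<in> carrier M \<Longrightarrow> a' \<in> carrier M \<Longrightarrow> b \<in> carrier M \<Longrightarrow> \<psi> a = \<psi> a' \<Longrightarrow>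
         \<psi> (a \<otimes>\<^bsub>M\<^esub> b) = \<psi> (a' \<otimes>\<^bsub>M\<^esub> b) \<and> \<psi> (b \<otimes>\<^bsub>M\<^esub> a) = \<psi> (b \<otimes>\<^bsub>M\<^esub> a')"
  shows "\<exists>(F::nat monoid) h. monoid F \<and> finite (carrier F) \<and> h \<in> monoid_hom M F \<and>
           (\<forall>a\<in>carrier M. \<forall>b\<in>carrier M. h a = h b \<longleftrightarrow> \<psi> a = \<psi> b)"
proof -
  interpret monoid M by (rule mon)
  obtain e :: "'c \<Rightarrow> nat" where e: "inj_on e (\<psi> ` carrier M)"
    using finite_imp_inj_to_nat_seg[OF fin] by blast
  define h where "h a = e (\<psi> a)" for a
  have hiff: "h a = h b \<longleftrightarrow> \<psi> a = \<psi> b" if "a \<in> carrier M" "b \<in> carrier M" for a b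
    using e that unfolding h_def by (auto dest: inj_onD)
  have comp2: "\<psi> (a \<otimes> b) = \<psi> (a' \<otimes> b')"
    if "a \<in> carrier M" "a' \<in> carrier M" "b \<in> carrier M" "b' \<in> carrier M" "\<psi> a = \<psi> a'" "\<psi> b = \<psi> b'"
    for a a' b b'
  proof -
    have "\<psi> (a \<otimes> b) = \<psi> (a' \<otimes> b)" using comp that by blast
    also have "\<dots> = \<psi> (a' \<otimes> b')" using comp that by blast
    finally show ?thesis .
  qed
  define rep where "rep m = (SOME a. a \<in> carrier M \<and> h a = m)" for m
  have rep: "rep (h a) \<in> carrier M \<and> h (rep (h a)) = h a" if "a \<in> carrier M" for a
    unfolding rep_def by (rule someI[of _ a]) (use that in auto)
  define F where "F = \<lparr>carrier = h ` carrier M, mult = (\<lambda>m k. h (rep m \<otimes> rep k)), one = h \<one>\<rparr>"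
  have mult: "h a \<otimes>\<^bsub>F\<^esub> h b = h (a \<otimes> b)" if "a \<in> carrier M" "b \<in> carrier M" for a b
  proof -
    have "\<psi> (rep (h a) \<otimes> rep (h b)) = \<psi> (a \<otimes> b)"
      using rep[OF that(1)] rep[OF that(2)] that hiff comp2 by metis
    then show ?thesis unfolding F_def using hiff rep that by simp
  qed
  have monF: "monoid F"
  proof (rule monoidI)
    fix x y assume "x \<in> carrier F" "y \<in> carrier F"
    then show "x \<otimes>\<^bsub>F\<^esub> y \<in> carrier F" unfolding F_def using rep by auto
  next
    show "\<one>\<^bsub>F\<^esub> \<in> carrier F" unfolding F_def by auto
  next
    fix x y w assume "x \<in> carrier F" "y \<in> carrier F" "w \<in> carrier F"
    then obtain a b c where "a \<in> carrier M" "b \<in> carrier M" "c \<in> carrier M" "x = h a" "y = h b" "w = h c"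
      unfolding F_def by auto
    then show "x \<otimes>\<^bsub>F\<^esub> y \<otimes>\<^bsub>F\<^esub> w = x \<otimes>\<^bsub>F\<^esub> (y \<otimes>\<^bsub>F\<^esub> w)"
      using mult by (simp add: m_assoc)
  next
    fix x assume "x \<in> carrier F"
    then obtain a where "a \<in> carrier M" "x = h a" unfolding F_def by auto
    then show "\<one>\<^bsub>F\<^esub> \<otimes>\<^bsub>F\<^esub> x = x" and "x \<otimes>\<^bsub>F\<^esub> \<one>\<^bsub>F\<^esub> = x"
      using mult[of \<one> a] mult[of a \<one>] by (auto simp: F_def)
  qed
  have "h \<in> monoid_hom M F"
    unfolding monoid_hom_def using mult by (auto simp: F_def)
  moreover have "finite (carrier F)"
  proof -
    have "carrier F = e ` \<psi> ` carrier M" unfolding F_def h_def by auto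
    then show ?thesis using fin by simp
  qed
  ultimately show ?thesis using monF hiff by blast
qed


theorem mainTheorem10:
  fixes M :: "'a monoid" and z :: 'a and I :: "'a set"
  assumes "monoid_with_zero M z"
    and "monoid_ideal M I"
    and "rf_compatible M I"
    and "submonoid ((carrier M - I) \<union> {z}) M"
  shows "residually_finite M \<longleftrightarrow> residually_finite (M\<lparr>carrier := (carrier M - I) \<union> {z}\<rparr>)"
proof -
  let ?N = "(carrier M - I) \<union> {z}"
  let ?NM = "M\<lparr>carrier := ?N\<rparr>"
  from assms(1) have mon: "monoid M" and zM: "z \<in> carrier M"
    and zl: "\<And>x. x \<in> carrier M \<Longrightarrow> z \<otimes>\<^bsub>M\<^esub> x = z"
    and zr: "\<And>x. x \<in> carrier M \<Longrightarrow> x \<otimes>\<^bsub>M\<^esub> z = z"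
    unfolding monoid_with_zero_def by auto
  interpret monoid M by (rule mon)
  from assms(2) have Ine: "I \<noteq> {}" and IM: "I \<subseteq> carrier M"
    and Iid: "\<And>x s. x \<in> carrier M \<Longrightarrow> s \<in> I \<Longrightarrow> x \<otimes>\<^bsub>M\<^esub> s \<in> I \<and> s \<otimes>\<^bsub>M\<^esub> x \<in> I"
    unfolding monoid_ideal_def by auto
  have zI: "z \<in> I"
  proof -
    obtain s where "s \<in> I" using Ine by blast
    then have "z \<otimes>\<^bsub>M\<^esub> s \<in> I" "z \<otimes>\<^bsub>M\<^esub> s = z" using Iid zM zl IM by auto
    then show ?thesis by simp
  qed
  interpret sub: submonoid ?N M by (rule assms(4))
  show ?thesis
  proof
    assume rf: "residually_finite M"
    show "residually_finite ?NM" unfolding residually_finite_def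
    proof (intro ballI impI)
      fix x y assume xy: "x \<in> carrier ?NM" "y \<in> carrier ?NM" "x \<noteq> y"
      then have "x \<in> carrier M" "y \<in> carrier M" by auto
      then obtain F :: "nat monoid" and h where Fh: "monoid F" "finite (carrier F)"
          "h \<in> monoid_hom M F" "h x \<noteq> h y"
        using rf xy(3) unfolding residually_finite_def by blast
      have "h \<in> monoid_hom ?NM F" using Fh(3) unfolding monoid_hom_def by auto
      then show "\<exists>(F :: nat monoid) h. monoid F \<and> finite (carrier F) \<and> h \<in> monoid_hom ?NM F \<and> h x \<noteq> h y"
        using Fh by blast
    qed
  next
    assume rfN: "residually_finite ?NM"
    show "residually_finite M" unfolding residually_finite_def
    proof (intro ballI impI)
      fix x y assume x: "x \<in> carrier M" and y: "y \<in> carrier M" and xy: "x \<noteq> y"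
      show "\<exists>(F :: nat monoid) h. monoid F \<and> finite (carrier F) \<and> h \<in> monoid_hom M F \<and> h x \<noteq> h y"
      proof (cases "x \<in> I \<and> y \<in> I")
        case False
        define \<phi> where "\<phi> a = (if a \<in> I then z else a)" for a
        have \<phi>N: "\<phi> a \<in> ?N" if "a \<in> carrier M" for a using that by (auto simp: \<phi>_def)
        have \<phi>mult: "\<phi> (a \<otimes>\<^bsub>M\<^esub> b) = \<phi> a \<otimes>\<^bsub>M\<^esub> \<phi> b" if a: "a \<in> carrier M" and b: "b \<in> carrier M" for a b
        proof (cases "a \<in> I \<or> b \<in> I")
          case True
          then have "a \<otimes>\<^bsub>M\<^esub> b \<in> I" using Iid a b by auto
          then show ?thesis using True a b zl zr by (auto simp: \<phi>_def)
        next
          case False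
          then have "a \<otimes>\<^bsub>M\<^esub> b \<in> ?N" using a b sub.m_closed by auto
          then show ?thesis using False by (auto simp: \<phi>_def)
        qed
        have \<phi>one: "\<phi> \<one>\<^bsub>M\<^esub> = \<one>\<^bsub>M\<^esub>"
        proof (cases "\<one>\<^bsub>M\<^esub> \<in> I")
          case True
          have "\<one>\<^bsub>M\<^esub> \<in> ?N" by (rule sub.one_closed)
          then show ?thesis using True by (auto simp: \<phi>_def)
        qed (auto simp: \<phi>_def)
        have \<phi>hom: "\<phi> \<in> monoid_hom M ?NM"
          unfolding monoid_hom_def using \<phi>N \<phi>mult \<phi>one by auto
        have "\<phi> x \<noteq> \<phi> y"
        proof (cases "x \<in> I")
          case True
          then have "y \<notin> I" using False by blast
          then show ?thesis using True zI unfolding \<phi>_def by force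
        next
          case xI: False
          show ?thesis
          proof (cases "y \<in> I")
            case True then show ?thesis using xI zI unfolding \<phi>_def by force
          next
            case False then show ?thesis using xI xy unfolding \<phi>_def by simp
          qed
        qed
        moreover have "\<phi> x \<in> carrier ?NM" "\<phi> y \<in> carrier ?NM" using \<phi>N[OF x] \<phi>N[OF y] by simp_all
        ultimately have "\<exists>(F :: nat monoid) f. monoid F \<and> finite (carrier F) \<and> f \<in> monoid_hom ?NM F \<and> f (\<phi> x) \<noteq> f (\<phi> y)"
          using rfN[unfolded residually_finite_def, rule_format] by blast
        then obtain F :: "nat monoid" and f where Ff: "monoid F" "finite (carrier F)"
            "f \<in> monoid_hom ?NM F" "f (\<phi> x) \<noteq> f (\<phi> y)"
          by blast
        have fP: "f \<in> ?N \<rightarrow> carrier F"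
          and fm: "\<And>u v. u \<in> ?N \<Longrightarrow> v \<in> ?N \<Longrightarrow> f (u \<otimes>\<^bsub>M\<^esub> v) = f u \<otimes>\<^bsub>F\<^esub> f v"
          and f1: "f \<one>\<^bsub>M\<^esub> = \<one>\<^bsub>F\<^esub>"
          using Ff(3) unfolding monoid_hom_def by auto
        have fh: "f \<circ> \<phi> \<in> monoid_hom M F"
          unfolding monoid_hom_def
        proof (intro CollectI conjI ballI)
          show "f \<circ> \<phi> \<in> carrier M \<rightarrow> carrier F" using fP \<phi>N by (auto simp: Pi_def)
        next
          fix u v assume "u \<in> carrier M" "v \<in> carrier M"
          then show "(f \<circ> \<phi>) (u \<otimes>\<^bsub>M\<^esub> v) = (f \<circ> \<phi>) u \<otimes>\<^bsub>F\<^esub> (f \<circ> \<phi>) v"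
            using \<phi>mult fm \<phi>N by simp
        next
          show "(f \<circ> \<phi>) \<one>\<^bsub>M\<^esub> = \<one>\<^bsub>F\<^esub>" using \<phi>one f1 by simp
        qed
        have "(f \<circ> \<phi>) x \<noteq> (f \<circ> \<phi>) y" using Ff(4) by simp
        then show ?thesis using Ff(1,2) fh by blast
      next
        case True
        obtain \<rho> where \<rho>: "semigroup_congruence M I \<rho>" "finite (I // \<rho>)" "(x, y) \<notin> \<rho>"
          "semigroup_congruence M (carrier M) (\<rho> \<union> Id_on (carrier M))"
          using assms(3) True xy unfolding rf_compatible_def by blast
        have eq: "equiv I \<rho>" using \<rho>(1) unfolding semigroup_congruence_def by auto
        have \<rho>I: "\<And>a b. (a, b) \<in> \<rho> \<Longrightarrow> a \<in> I \<and> b \<in> I"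
          using eq unfolding equiv_def refl_on_def by auto
        have \<rho>refl: "\<And>a. a \<in> I \<Longrightarrow> (a, a) \<in> \<rho>"
          using eq unfolding equiv_def refl_on_def by auto
        have cl: "(c \<otimes>\<^bsub>M\<^esub> a, c \<otimes>\<^bsub>M\<^esub> b) \<in> \<rho> \<and> (a \<otimes>\<^bsub>M\<^esub> c, b \<otimes>\<^bsub>M\<^esub> c) \<in> \<rho>"
          if ab: "(a, b) \<in> \<rho>" and c: "c \<in> carrier M" for a b c
        proof -
          have "(a, b) \<in> \<rho> \<union> Id_on (carrier M)" using ab by auto
          then have "(c \<otimes>\<^bsub>M\<^esub> a, c \<otimes>\<^bsub>M\<^esub> b) \<in> \<rho> \<union> Id_on (carrier M) \<and> (a \<otimes>\<^bsub>M\<^esub> c, b \<otimes>\<^bsub>M\<^esub> c) \<in> \<rho> \<union> Id_on (carrier M)"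
            using \<rho>(4) c unfolding semigroup_congruence_def by blast
          moreover have "c \<otimes>\<^bsub>M\<^esub> a \<in> I" "a \<otimes>\<^bsub>M\<^esub> c \<in> I" using \<rho>I[OF ab] Iid c by auto
          ultimately show ?thesis using \<rho>refl by (auto simp: Id_on_def)
        qed
        define rep where "rep C = (SOME s. s \<in> C)" for C :: "'a set"
        have repC: "rep C \<in> I \<and> C = \<rho> `` {rep C}" if Cq: "C \<in> I // \<rho>" for C
        proof -
          obtain s where s: "s \<in> I" "C = \<rho> `` {s}" using Cq by (elim quotientE) blast
          then have "s \<in> C" using \<rho>refl by auto
          then have r: "rep C \<in> C" unfolding rep_def by (rule someI)
          then have "(s, rep C) \<in> \<rho>" using s by auto
          then show ?thesis using s equiv_class_eq[OF eq] \<rho>I by metis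
        qed
        have repS: "(rep (\<rho> `` {s}), s) \<in> \<rho>" if "s \<in> I" for s
        proof -
          have C: "\<rho> `` {s} \<in> I // \<rho>" using that by (rule quotientI)
          then have "rep (\<rho> `` {s}) \<in> I" "\<rho> `` {s} = \<rho> `` {rep (\<rho> `` {s})}" using repC by auto
          then show ?thesis using eq_equiv_class_iff[OF eq] that by metis
        qed
        have F1: "\<rho> `` {a \<otimes>\<^bsub>M\<^esub> rep (\<rho> `` {s})} = \<rho> `` {a \<otimes>\<^bsub>M\<^esub> s}"
             "\<rho> `` {rep (\<rho> `` {s}) \<otimes>\<^bsub>M\<^esub> a} = \<rho> `` {s \<otimes>\<^bsub>M\<^esub> a}"
          if "s \<in> I" "a \<in> carrier M" for a s
          using cl[OF repS[OF that(1)] that(2)] equiv_class_eq[OF eq] by auto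
        define K where "K = {s \<in> I. (s, z) \<in> \<rho>}"
        define LL where "LL a = (\<lambda>C\<in>I // \<rho>. \<rho> `` {a \<otimes>\<^bsub>M\<^esub> rep C})" for a
        define RR where "RR a = (\<lambda>C\<in>I // \<rho>. \<rho> `` {rep C \<otimes>\<^bsub>M\<^esub> a})" for a
        define \<psi> where "\<psi> a = (if a \<in> I \<and> (a, z) \<notin> \<rho> then Inl (\<rho> `` {a}) else Inr (LL a, RR a))" for a
        have LLin: "LL a C \<in> I // \<rho>" "RR a C \<in> I // \<rho>" if "a \<in> carrier M" "C \<in> I // \<rho>" for a C
          using that repC Iid by (auto simp: LL_def RR_def intro: quotientI)
        have LLcomp: "LL (a \<otimes>\<^bsub>M\<^esub> b) C = LL a (LL b C)" "RR (a \<otimes>\<^bsub>M\<^esub> b) C = RR b (RR a C)"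
          if a: "a \<in> carrier M" and b: "b \<in> carrier M" and C: "C \<in> I // \<rho>" for a b C
        proof -
          have r: "rep C \<in> I" using repC C by auto
          have rM: "rep C \<in> carrier M" using r IM by auto
          have "LL a (LL b C) = \<rho> `` {a \<otimes>\<^bsub>M\<^esub> rep (\<rho> `` {b \<otimes>\<^bsub>M\<^esub> rep C})}"
            using LLin[OF b C] C by (simp add: LL_def)
          also have "\<dots> = \<rho> `` {a \<otimes>\<^bsub>M\<^esub> (b \<otimes>\<^bsub>M\<^esub> rep C)}" using F1(1)[of "b \<otimes>\<^bsub>M\<^esub> rep C" a] Iid r a b by auto
          finally show "LL (a \<otimes>\<^bsub>M\<^esub> b) C = LL a (LL b C)" using C a b r IM by (simp add: LL_def m_assoc[OF a b rM])
          have "RR b (RR a C) = \<rho> `` {rep (\<rho> `` {rep C \<otimes>\<^bsub>M\<^esub> a}) \<otimes>\<^bsub>M\<^esub> b}"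
            using LLin[OF a C] C by (simp add: RR_def)
          also have "\<dots> = \<rho> `` {(rep C \<otimes>\<^bsub>M\<^esub> a) \<otimes>\<^bsub>M\<^esub> b}" using F1(2)[of "rep C \<otimes>\<^bsub>M\<^esub> a" b] Iid r a b by auto
          finally show "RR (a \<otimes>\<^bsub>M\<^esub> b) C = RR b (RR a C)" using C a b r IM by (simp add: RR_def m_assoc[OF rM a b])
        qed
        have psiI: "\<psi> s = \<psi> t" if st: "(s, t) \<in> \<rho>" for s t
        proof -
          have sI: "s \<in> I" "t \<in> I" using \<rho>I st by auto
          have K: "(s, z) \<in> \<rho> \<longleftrightarrow> (t, z) \<in> \<rho>" using st eq unfolding equiv_def sym_def trans_def by metis
          have LL: "LL s = LL t" "RR s = RR t" unfolding LL_def RR_def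
          proof (rule_tac[!] restrict_ext)
            fix C assume "C \<in> I // \<rho>"
            then have "rep C \<in> carrier M" using repC IM by auto
            then show "\<rho> `` {s \<otimes>\<^bsub>M\<^esub> rep C} = \<rho> `` {t \<otimes>\<^bsub>M\<^esub> rep C}"
                 "\<rho> `` {rep C \<otimes>\<^bsub>M\<^esub> s} = \<rho> `` {rep C \<otimes>\<^bsub>M\<^esub> t}"
              using cl[OF st] equiv_class_eq[OF eq] by blast+
          qed
          show ?thesis
          proof (cases "(s, z) \<in> \<rho>")
            case True then show ?thesis using K LL by (simp add: \<psi>_def)
          next
            case False then show ?thesis using K sI st equiv_class_eq[OF eq] by (simp add: \<psi>_def)
          qed
        qed
        have comp: "\<psi> (a \<otimes>\<^bsub>M\<^esub> b) = \<psi> (a' \<otimes>\<^bsub>M\<^esub> b) \<and> \<psi> (b \<otimes>\<^bsub>M\<^esub> a) = \<psi> (b \<otimes>\<^bsub>M\<^esub> a')"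
          if a: "a \<in> carrier M" and a': "a' \<in> carrier M" and b: "b \<in> carrier M" and ps: "\<psi> a = \<psi> a'" for a a' b
        proof (cases "a \<in> I \<and> (a, z) \<notin> \<rho>")
          case True
          then have "a' \<in> I \<and> (a', z) \<notin> \<rho>" "\<rho> `` {a} = \<rho> `` {a'}" using ps
            by (auto simp: \<psi>_def split: if_splits)
          then have "(a, a') \<in> \<rho>" using True eq_equiv_class_iff[OF eq] by metis
          then show ?thesis using cl b psiI by blast
        next
          case False
          then have False': "\<not> (a' \<in> I \<and> (a', z) \<notin> \<rho>)" "LL a = LL a'" "RR a = RR a'" using ps
            by (auto simp: \<psi>_def split: if_splits)
          show ?thesis
          proof (cases "b \<in> I")
            case True
            have "\<rho> `` {a \<otimes>\<^bsub>M\<^esub> b} = LL a (\<rho> `` {b})" using F1(1)[OF True a] True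
              by (simp add: LL_def quotientI)
            also have "\<dots> = LL a' (\<rho> `` {b})" using False' by simp
            also have "\<dots> = \<rho> `` {a' \<otimes>\<^bsub>M\<^esub> b}" using F1(1)[OF True a'] True
              by (simp add: LL_def quotientI)
            finally have 1: "(a \<otimes>\<^bsub>M\<^esub> b, a' \<otimes>\<^bsub>M\<^esub> b) \<in> \<rho>"
              using eq_equiv_class_iff[OF eq] Iid a a' True by metis
            have "\<rho> `` {b \<otimes>\<^bsub>M\<^esub> a} = RR a (\<rho> `` {b})" using F1(2)[OF True a] True
              by (simp add: RR_def quotientI)
            also have "\<dots> = RR a' (\<rho> `` {b})" using False' by simp
            also have "\<dots> = \<rho> `` {b \<otimes>\<^bsub>M\<^esub> a'}" using F1(2)[OF True a'] True
              by (simp add: RR_def quotientI)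
            finally have 2: "(b \<otimes>\<^bsub>M\<^esub> a, b \<otimes>\<^bsub>M\<^esub> a') \<in> \<rho>"
              using eq_equiv_class_iff[OF eq] Iid a a' True by metis
            show ?thesis using 1 2 psiI by blast
          next
            case bI: False
            have outer: "\<not> (c \<otimes>\<^bsub>M\<^esub> b \<in> I \<and> (c \<otimes>\<^bsub>M\<^esub> b, z) \<notin> \<rho>) \<and> \<not> (b \<otimes>\<^bsub>M\<^esub> c \<in> I \<and> (b \<otimes>\<^bsub>M\<^esub> c, z) \<notin> \<rho>)"
              if c: "c \<in> carrier M" "\<not> (c \<in> I \<and> (c, z) \<notin> \<rho>)" for c
            proof (cases "c \<in> I")
              case True
              then have cz: "(c, z) \<in> \<rho>" using c by auto
              show ?thesis using cl[OF cz b] zl[OF b] zr[OF b] \<rho>I by auto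
            next
              case False
              then have "c \<otimes>\<^bsub>M\<^esub> b \<in> ?N" "b \<otimes>\<^bsub>M\<^esub> c \<in> ?N" using c b bI sub.m_closed by auto
              then show ?thesis using \<rho>refl zI by auto
            qed
            have o1: "\<psi> (a \<otimes>\<^bsub>M\<^esub> b) = Inr (LL (a \<otimes>\<^bsub>M\<^esub> b), RR (a \<otimes>\<^bsub>M\<^esub> b))"
                "\<psi> (b \<otimes>\<^bsub>M\<^esub> a) = Inr (LL (b \<otimes>\<^bsub>M\<^esub> a), RR (b \<otimes>\<^bsub>M\<^esub> a))"
              using outer[OF a False] by (auto simp: \<psi>_def)
            have o2: "\<psi> (a' \<otimes>\<^bsub>M\<^esub> b) = Inr (LL (a' \<otimes>\<^bsub>M\<^esub> b), RR (a' \<otimes>\<^bsub>M\<^esub> b))"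
                "\<psi> (b \<otimes>\<^bsub>M\<^esub> a') = Inr (LL (b \<otimes>\<^bsub>M\<^esub> a'), RR (b \<otimes>\<^bsub>M\<^esub> a'))"
              using outer[OF a' False'(1)] by (auto simp: \<psi>_def)
            have e1: "LL (a \<otimes>\<^bsub>M\<^esub> b) = LL (a' \<otimes>\<^bsub>M\<^esub> b)" "RR (a \<otimes>\<^bsub>M\<^esub> b) = RR (a' \<otimes>\<^bsub>M\<^esub> b)"
                 "LL (b \<otimes>\<^bsub>M\<^esub> a) = LL (b \<otimes>\<^bsub>M\<^esub> a')" "RR (b \<otimes>\<^bsub>M\<^esub> a) = RR (b \<otimes>\<^bsub>M\<^esub> a')"
            proof -
              have "LL (a \<otimes>\<^bsub>M\<^esub> b) C = LL (a' \<otimes>\<^bsub>M\<^esub> b) C \<and> RR (a \<otimes>\<^bsub>M\<^esub> b) C = RR (a' \<otimes>\<^bsub>M\<^esub> b) C \<and>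
                    LL (b \<otimes>\<^bsub>M\<^esub> a) C = LL (b \<otimes>\<^bsub>M\<^esub> a') C \<and> RR (b \<otimes>\<^bsub>M\<^esub> a) C = RR (b \<otimes>\<^bsub>M\<^esub> a') C" for C
              proof (cases "C \<in> I // \<rho>")
                case True
                then show ?thesis using LLcomp[OF a b True] LLcomp[OF a' b True]
                    LLcomp[OF b a True] LLcomp[OF b a' True] False' LLin[OF b True] by simp
              next
                case False
                then show ?thesis by (simp add: LL_def RR_def)
              qed
              then show "LL (a \<otimes>\<^bsub>M\<^esub> b) = LL (a' \<otimes>\<^bsub>M\<^esub> b)" "RR (a \<otimes>\<^bsub>M\<^esub> b) = RR (a' \<otimes>\<^bsub>M\<^esub> b)"
                 "LL (b \<otimes>\<^bsub>M\<^esub> a) = LL (b \<otimes>\<^bsub>M\<^esub> a')" "RR (b \<otimes>\<^bsub>M\<^esub> a) = RR (b \<otimes>\<^bsub>M\<^esub> a')" by auto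
            qed
            show ?thesis using o1 o2 e1 by simp
          qed
        qed
        have fin: "finite (\<psi> ` carrier M)"
        proof -
          let ?P = "I // \<rho> \<rightarrow>\<^sub>E I // \<rho>"
          have "\<psi> ` carrier M \<subseteq> Inl ` (I // \<rho>) \<union> Inr ` (?P \<times> ?P)"
          proof
            fix w assume "w \<in> \<psi> ` carrier M"
            then obtain a where a: "a \<in> carrier M" "w = \<psi> a" by auto
            have "LL a \<in> ?P" "RR a \<in> ?P" using LLin[OF a(1)] by (auto simp: LL_def RR_def)
            then show "w \<in> Inl ` (I // \<rho>) \<union> Inr ` (?P \<times> ?P)"
              using a by (auto simp: \<psi>_def intro: quotientI)
          qed
          moreover have "finite ?P" using \<rho>(2) by (simp add: finite_PiE)
          ultimately show ?thesis using \<rho>(2) by (auto intro: finite_subset)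
        qed
        have sep: "\<psi> x \<noteq> \<psi> y"
        proof
          assume e: "\<psi> x = \<psi> y"
          show False
          proof (cases "(x, z) \<in> \<rho>")
            case True
            then have "(y, z) \<in> \<rho>" using e True \<open>x \<in> I \<and> y \<in> I\<close> by (auto simp: \<psi>_def split: if_splits)
            then show False using True \<rho>(3) eq unfolding equiv_def sym_def trans_def by metis
          next
            case False
            then have "\<rho> `` {x} = \<rho> `` {y}" using e \<open>x \<in> I \<and> y \<in> I\<close>
              by (auto simp: \<psi>_def split: if_splits)
            then show False using \<rho>(3) eq_equiv_class_iff[OF eq] \<open>x \<in> I \<and> y \<in> I\<close> by metis
          qed
        qed
        obtain F :: "nat monoid" and h where Fh: "monoid F" "finite (carrier F)" "h \<in> monoid_hom M F"
            "\<forall>a\<in>carrier M. \<forall>b\<in>carrier M. h a = h b \<longleftrightarrow> \<psi> a = \<psi> b"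
          using finite_quot_hom[OF mon fin comp] by blast
        then show ?thesis using sep x y by blast
      qed
    qed
  qed
qed

end
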